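(* For every integer $n\ge 0$, $c_9(n)$ is odd if $n=(5j^2+j)/2$ for some $j\in\mathbb{Z}$, and $c_9(n)$ is even otherwise.
   Context: A partition of $n\ge 0$ is a finite multiset of positive integers summing to $n$; the empty partition is the partition of $0$. For $n\ge 0$, $c_9(n)$ denotes the number of partitions $\lambda$ of $n$ such that either (a) all parts of $\lambda$ are distinct and greater than $1$, or (b) there is an integer $j\ge 2$ such that the part $1$ appears exactly $j^2$ times and every other part of $\lambda$ is at least $j+1$ and appears at most once. *)

theory Defs
  imports Main "HOL-Library.Multiset"
begin

definition is_partition :: "nat multiset \<Rightarrow> nat \<Rightarrow> bool" where
  "is_partition p n \<longleftrightarrow> (\<forall>x\<in>#p. 0 < x) \<and> sum_mset p = n"

definition c9_cond_a :: "nat multiset \<Rightarrow> bool" where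
  "c9_cond_a p \<longleftrightarrow> (\<forall>x\<in>#p. 1 < x \<and> count p x = 1)"

definition c9_cond_b :: "nat multiset \<Rightarrow> bool" where
  "c9_cond_b p \<longleftrightarrow> (\<exists>j::nat. 2 \<le> j \<and> count p 1 = j^2 \<and>
      (\<forall>x\<in>#p. x \<noteq> 1 \<longrightarrow> j + 1 \<le> x \<and> count p x \<le> 1))"

definition c9 :: "nat \<Rightarrow> nat" where
  "c9 n = card {p. is_partition p n \<and> (c9_cond_a p \<or> c9_cond_b p)}"

end

theory Submission
  imports Defs "HOL-Computational_Algebra.Polynomial"
begin


fun tri :: "nat \<Rightarrow> nat" where
  "tri 0 = 0" | "tri (Suc k) = tri k + k"

definition P :: "real \<Rightarrow> nat \<Rightarrow> real" where
  "P q k = (\<Prod>i\<in>{1..k}. (1 - q^i))"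

definition R :: "real \<Rightarrow> nat \<Rightarrow> nat \<Rightarrow> real" where
  "R q s m = (\<Prod>i\<in>{s..<s+m}. (1 - q^i))"

fun qb :: "real \<Rightarrow> nat \<Rightarrow> nat \<Rightarrow> real" where
  "qb q m 0 = 1"
| "qb q 0 (Suc i) = 0"
| "qb q (Suc m) (Suc i) = qb q m i + q^(Suc i) * qb q m (Suc i)"

lemma P_0 [simp]: "P q 0 = 1" by (simp add: P_def)
lemma P_Suc: "P q (Suc k) = P q k * (1 - q^Suc k)"
  by (simp add: P_def)
lemma R_0 [simp]: "R q s 0 = 1" by (simp add: R_def)
lemma R_Suc: "R q s (Suc m) = (1 - q^s) * R q (Suc s) m"
proof -
  have "{s..<s+Suc m} = insert s {Suc s..<Suc s+m}" by auto
  then show ?thesis by (simp add: R_def)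
qed
lemma R_Suc': "R q s (Suc m) = R q s m * (1 - q^(s+m))"
  by (simp add: R_def)

lemma P_add: "P q (a+b) = P q a * R q (Suc a) b"
  by (induction b) (auto simp: P_Suc R_Suc')

lemma P_pos: assumes "0 < q" "q < 1" shows "0 < P q k"
  unfolding P_def
proof (rule prod_pos)
  fix i assume "i \<in> {1..k}"
  then have "q^i < 1" using assms by (simp add: power_less_one_iff)
  then show "0 < 1 - q^i" by simp
qed

lemma qb_zero: "m < i \<Longrightarrow> qb q m i = 0"
proof (induction m arbitrary: i)
  case 0 then show ?case by (cases i) auto
next
  case (Suc m) then show ?case by (cases i) auto
qed

lemma qb_same [simp]: "qb q m m = 1"
  by (induction m) (auto simp: qb_zero)

lemma qb_closed: "i \<le> m \<Longrightarrow> qb q m i * P q i * P q (m-i) = P q m"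
proof (induction m arbitrary: i)
  case 0 then show ?case by simp
next
  case (Suc m)
  show ?case
  proof (cases i)
    case 0 then show ?thesis by simp
  next
    case (Suc k)
    show ?thesis
    proof (cases "k = m")
      case True then show ?thesis using Suc by simp
    next
      case False
      then have km: "k < m" using Suc \<open>i \<le> Suc m\<close> by simp
      have IH1: "qb q m k * P q k * P q (m-k) = P q m" using Suc.IH km by simp
      have IH2: "qb q m (Suc k) * P q (Suc k) * P q (m - Suc k) = P q m" using Suc.IH km by simp
      have e1: "P q (m-k) = P q (m - Suc k) * (1 - q^(m-k))"
        using km P_Suc[of q "m - Suc k"] by (simp add: Suc_diff_Suc)
      have "qb q (Suc m) i * P q i * P q (Suc m - i)
          = (qb q m k + q^(Suc k) * qb q m (Suc k)) * (P q k * (1 - q^Suc k)) * P q (m - k)"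
        using Suc by (simp add: P_Suc)
      also have "\<dots> = (qb q m k * P q k * P q (m-k)) * (1 - q^Suc k)
           + q^(Suc k) * (qb q m (Suc k) * P q (Suc k) * P q (m - Suc k)) * (1 - q^(m-k))"
        by (simp add: e1 P_Suc algebra_simps)
      also have "\<dots> = P q m * ((1 - q^Suc k) + q^(Suc k) * (1 - q^(m-k)))"
        by (simp only: IH1 IH2, simp add: algebra_simps)
      also have "(1 - q^Suc k) + q^(Suc k) * (1 - q^(m-k)) = 1 - q^Suc m"
      proof -
        have "Suc m = Suc k + (m-k)" using km by simp
        then have h0: "q^(Suc k) * q^(m-k) = q^(Suc m)" by (metis power_add)
        have "q^(Suc k) * (1 - q^(m-k)) = q^(Suc k) - q^(Suc m)"
          by (simp only: right_diff_distrib h0 mult_1_right)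
        then show ?thesis by linarith
      qed
      finally show ?thesis by (simp add: P_Suc)
    qed
  qed
qed

definition tK :: "real \<Rightarrow> nat \<Rightarrow> nat \<Rightarrow> nat \<Rightarrow> real" where
  "tK q m a i = q^(i^2 + a*i) * qb q m i * R q (a+i+1) (m-i)"

lemma K0: "(\<Sum>i\<le>m. tK q m a i) = 1"
proof (induction m arbitrary: a)
  case 0 then show ?case by (simp add: tK_def)
next
  case (Suc m)
  define t' where "t' = tK q m (Suc a)"
  define g where "g k = (1 - q^(a+1+k)) * t' k" for k
  have h0: "tK q (Suc m) a 0 = g 0"
    by (simp add: tK_def g_def t'_def R_Suc)
  have hS: "tK q (Suc m) a (Suc i) = q^(a+1+i) * t' i + g (Suc i)" if "i \<le> m" for i
  proof -
    have ex1: "(Suc i)^2 + a * Suc i = (i^2 + Suc a * i) + (a+1+i)"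
      by (simp add: power2_eq_square algebra_simps)
    have ex2: "(Suc i)^2 + a * Suc i + Suc i = (Suc i)^2 + Suc a * Suc i"
      by (simp add: algebra_simps)
    have W: "q^((Suc i)^2 + a * Suc i) * (q^(Suc i) * qb q m (Suc i)) * R q (a + Suc i + 1) (Suc m - Suc i)
        = g (Suc i)"
    proof (cases "i = m")
      case True then show ?thesis by (simp add: g_def t'_def tK_def qb_zero)
    next
      case False
      then have "m - i = Suc (m - Suc i)" using that by simp
      then have Rf: "R q (a + Suc i + 1) (Suc m - Suc i) = (1 - q^(a+1+Suc i)) * R q (Suc a + Suc i + 1) (m - Suc i)"
        by (simp add: R_Suc)
      have pw: "q^((Suc i)^2 + a * Suc i) * q^(Suc i) = q^((Suc i)^2 + Suc a * Suc i)"
        by (simp only: power_add[symmetric] ex2)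
      have "q^((Suc i)^2 + a * Suc i) * (q^(Suc i) * qb q m (Suc i)) * R q (a + Suc i + 1) (Suc m - Suc i)
          = (q^((Suc i)^2 + a * Suc i) * q^(Suc i)) * qb q m (Suc i) * ((1 - q^(a+1+Suc i)) * R q (Suc a + Suc i + 1) (m - Suc i))"
        by (simp only: Rf mult.assoc)
      also have "\<dots> = (1 - q^(a+1+Suc i)) * (q^((Suc i)^2 + Suc a * Suc i) * qb q m (Suc i) * R q (Suc a + Suc i + 1) (m - Suc i))"
        unfolding pw by (simp only: mult_ac)
      finally show ?thesis by (simp only: g_def t'_def tK_def)
    qed
    have "tK q (Suc m) a (Suc i) = q^((Suc i)^2 + a * Suc i) * qb q m i * R q (a + Suc i + 1) (Suc m - Suc i)
        + q^((Suc i)^2 + a * Suc i) * (q^(Suc i) * qb q m (Suc i)) * R q (a + Suc i + 1) (Suc m - Suc i)"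
      by (simp add: tK_def algebra_simps)
    also have "q^((Suc i)^2 + a * Suc i) * qb q m i * R q (a + Suc i + 1) (Suc m - Suc i) = q^(a+1+i) * t' i"
    proof -
      have pw1: "q^((Suc i)^2 + a*Suc i) = q^(i^2 + Suc a * i) * q^(a+1+i)" by (simp only: ex1 power_add)
      show ?thesis unfolding t'_def tK_def pw1 by (simp add: mult_ac)
    qed
    finally show ?thesis using W by simp
  qed
  have gS: "g (Suc m) = 0" by (simp add: g_def t'_def tK_def qb_zero)
  have "(\<Sum>i\<le>Suc m. tK q (Suc m) a i) = tK q (Suc m) a 0 + (\<Sum>i\<le>m. tK q (Suc m) a (Suc i))"
    by (rule sum.atMost_Suc_shift)
  also have "\<dots> = g 0 + (\<Sum>i\<le>m. q^(a+1+i) * t' i + g (Suc i))"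
    using h0 hS by (intro arg_cong2[where f="(+)"] sum.cong) auto
  also have "\<dots> = g 0 + (\<Sum>i\<le>m. q^(a+1+i) * t' i) + (\<Sum>i\<le>m. g (Suc i))"
    by (simp add: sum.distrib)
  finally have A: "(\<Sum>i\<le>Suc m. tK q (Suc m) a i) = g 0 + (\<Sum>i\<le>m. q^(a+1+i) * t' i) + (\<Sum>i\<le>m. g (Suc i))" .
  have B: "g 0 + (\<Sum>i\<le>m. g (Suc i)) = (\<Sum>i\<le>Suc m. g i)"
    by (rule sum.atMost_Suc_shift[symmetric])
  have "(\<Sum>i\<le>Suc m. tK q (Suc m) a i) = (\<Sum>i\<le>m. q^(a+1+i) * t' i) + (\<Sum>i\<le>m. g i)"
    using A B gS by simp
  also have "\<dots> = (\<Sum>i\<le>m. t' i)"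
    by (simp add: g_def sum.distrib[symmetric] algebra_simps)
  also have "\<dots> = 1" using Suc.IH by (simp add: t'_def)
  finally show ?case .
qed

lemma tri_add: "tri (a+b) = tri a + tri b + a*b"
  by (induction b) (auto simp: algebra_simps)

lemma tri_sq: "2 * tri r + r = r*r"
  by (induction r) (auto simp: algebra_simps)

lemma qbinom_thm: "(\<Prod>i<N. (1 - z*q^i)) = (\<Sum>s\<le>N. (-1)^s * q^(tri s) * qb q N s * z^s)"
proof (induction N arbitrary: z)
  case 0 then show ?case by simp
next
  case (Suc N)
  define A where "A s = (-1)^s * q^(tri s) * qb q N s * z^s * q^s" for s
  have "(\<Prod>i<Suc N. (1 - z*q^i)) = (1 - z) * (\<Prod>i<N. (1 - (z*q)*q^i))"
    by (subst prod.lessThan_Suc_shift) (simp add: mult.assoc)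
  also have "\<dots> = (1 - z) * (\<Sum>s\<le>N. A s)"
    using Suc.IH[of "z*q"] by (simp add: A_def power_mult_distrib mult_ac)
  also have "\<dots> = (\<Sum>s\<le>N. A s) - (\<Sum>s\<le>N. z * A s)"
    by (simp add: left_diff_distrib sum_distrib_left sum_subtractf)
  finally have L: "(\<Prod>i<Suc N. (1 - z*q^i)) = (\<Sum>s\<le>N. A s) - (\<Sum>s\<le>N. z * A s)" .
  have AS: "A (Suc N) = 0" by (simp add: A_def qb_zero)
  have "(\<Sum>s\<le>Suc N. (-1)^s * q^(tri s) * qb q (Suc N) s * z^s)
      = 1 + (\<Sum>s\<le>N. (-1)^(Suc s) * q^(tri (Suc s)) * qb q (Suc N) (Suc s) * z^(Suc s))"
    by (subst sum.atMost_Suc_shift) simp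
  also have "\<dots> = 1 + (\<Sum>s\<le>N. - (z * A s) + A (Suc s))"
    by (intro arg_cong2[where f="(+)"] refl sum.cong) (auto simp: A_def algebra_simps power_add)
  also have "\<dots> = (A 0 + (\<Sum>s\<le>N. A (Suc s))) - (\<Sum>s\<le>N. z * A s)"
    by (simp add: sum.distrib sum_negf sum_subtractf A_def[of 0])
  also have "A 0 + (\<Sum>s\<le>N. A (Suc s)) = (\<Sum>s\<le>Suc N. A s)"
    by (rule sum.atMost_Suc_shift[symmetric])
  also have "\<dots> = (\<Sum>s\<le>N. A s)" using AS by simp
  finally show ?case using L by simp
qed

lemma qb_formula: assumes "0 < q" "q < 1" "s \<le> N"
  shows "qb q N s = P q N / (P q s * P q (N - s))"
proof -
  have "P q s > 0" "P q (N-s) > 0" using assms P_pos by auto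
  then show ?thesis using qb_closed[OF assms(3), of q] by (simp add: field_simps)
qed

lemma qb_sym: assumes "0 < q" "q < 1" "s \<le> N"
  shows "qb q N (N - s) = qb q N s"
  using qb_formula[OF assms] qb_formula[OF assms(1,2), of "N-s" N] assms(3)
  by (simp add: mult.commute)

definition c' :: "real \<Rightarrow> nat \<Rightarrow> real" where
  "c' q r = (if r = 0 then 1 else (-1)^r * (q^(tri r) + q^(tri (Suc r))))"

lemma U0: assumes "0 < (q::real)" "1 \<le> j"
  shows "(\<Sum>s\<le>2*j. (-1)^s * q^(tri s) * qb q (2*j) s * (inverse (q^j))^s) = 0"
proof -
  have "(\<Prod>i<2*j. (1 - inverse (q^j) * q^i)) = 0"
    using assms by (intro prod_zero) (auto intro!: bexI[of _ j])
  then show ?thesis using qbinom_thm[where N="2*j" and z="inverse (q^j)" and q=q] by simp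
qed

lemma pw_claim1: assumes "0 < (q::real)"
  shows "q^(tri (j+r)) * (inverse (q^j))^(j+r) = q^(tri j) * inverse (q^(j*j)) * q^(tri r)"
proof -
  have e: "tri (j+r) = tri j + tri r + j*r" by (rule tri_add)
  have "(inverse (q^j))^(j+r) = inverse (q^(j*j)) * inverse (q^(j*r))"
    by (metis inverse_mult_distrib power_add power_inverse power_mult distrib_left)
  then show ?thesis using assms by (simp add: e power_add field_simps)
qed

lemma pw_claim2: assumes "0 < (q::real)" "r \<le> j"
  shows "q^(tri (j-r)) * (inverse (q^j))^(j-r) = q^(tri j) * inverse (q^(j*j)) * q^(tri (Suc r))"
proof -
  define d where "d = j - r"
  have j: "j = d + r" using assms d_def by simp
  have E1: "tri d + (d+r)*(d+r) = tri (d+r) + tri (Suc r) + (d+r)*d"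
    using tri_sq[of r] by (simp add: tri_add algebra_simps)
  have h: "q^(tri d) * q^((d+r)*(d+r)) = q^(tri (d+r)) * q^(tri (Suc r)) * q^((d+r)*d)"
  proof -
    have H: "q^(tri d + (d+r)*(d+r)) = q^(tri (d+r) + tri (Suc r) + (d+r)*d)" by (simp only: E1)
    show ?thesis by (metis H power_add)
  qed
  have "(inverse (q^(d+r)))^d = inverse (q^((d+r)*d))"
    by (metis power_inverse power_mult)
  moreover have "q^(tri d) * inverse (q^((d+r)*d)) = q^(tri (d+r)) * inverse (q^((d+r)*(d+r))) * q^(tri (Suc r))"
    using h assms by (simp add: field_simps)
  ultimately show ?thesis by (simp add: j d_def[symmetric])
qed

lemma neg1_pow_diff: "r \<le> j \<Longrightarrow> (-1::real)^(j-r) = (-1)^j * (-1)^r"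
proof -
  assume "r \<le> j"
  then have "(-1::real)^j = (-1)^(j-r) * (-1)^r" by (metis le_add_diff_inverse2 power_add)
  then have "(-1::real)^j * (-1)^r = (-1)^(j-r) * ((-1)^r * (-1)^r)" by simp
  also have "(-1::real)^r * (-1)^r = 1" by (simp flip: power_add)
  finally show ?thesis by simp
qed

lemma U: assumes "0 < q" "q < 1" "1 \<le> j"
  shows "(\<Sum>r\<le>j. c' q r * qb q (2*j) (j+r)) = 0"
proof -
  define F where "F s = (-1)^s * q^(tri s) * qb q (2*j) s * (inverse (q^j))^s" for s
  define K where "K = q^(tri j) * inverse (q^(j*j)) * (-1)^j"
  define A where "A r = (-1)^r * q^(tri r) * qb q (2*j) (j+r)" for r
  define B where "B r = (if r = 0 then 0 else (-1)^r * q^(tri (Suc r)) * qb q (2*j) (j+r))" for r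
  have sp: "{..2*j} = {..<j} \<union> {j..2*j}" by auto
  have "(\<Sum>s\<le>2*j. F s) = (\<Sum>s<j. F s) + (\<Sum>s\<in>{j..2*j}. F s)"
    unfolding sp by (rule sum.union_disjoint) auto
  also have "(\<Sum>s\<in>{j..2*j}. F s) = (\<Sum>r\<in>{0..j}. F (r+j))"
    using sum.shift_bounds_cl_nat_ivl[of F 0 j j] by (simp add: mult_2)
  also have "\<dots> = (\<Sum>r\<in>{0..j}. K * A r)"
  proof (rule sum.cong)
    fix r assume "r \<in> {0..j}"
    have "F (r+j) = (-1)^j * (-1)^r * (q^(tri (j+r)) * (inverse (q^j))^(j+r)) * qb q (2*j) (j+r)"
      by (simp add: F_def power_add add.commute mult_ac)
    also have "\<dots> = K * A r" using pw_claim1[OF assms(1), of j r]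
      by (simp add: K_def A_def mult_ac)
    finally show "F (r+j) = K * A r" .
  qed simp
  also have "(\<Sum>s<j. F s) = (\<Sum>i<j. F (j - Suc i))"
    by (rule sum.nat_diff_reindex[symmetric])
  also have "\<dots> = (\<Sum>i<j. K * B (Suc i))"
  proof (rule sum.cong)
    fix i assume "i \<in> {..<j}"
    then have ij: "Suc i \<le> j" by simp
    have qs: "qb q (2*j) (j - Suc i) = qb q (2*j) (j + Suc i)"
      using qb_sym[OF assms(1,2), of "j + Suc i" "2*j"] ij by simp
    have "F (j - Suc i) = (-1)^j * (-1)^(Suc i) * (q^(tri (j - Suc i)) * (inverse (q^j))^(j - Suc i)) * qb q (2*j) (j + Suc i)"
      unfolding F_def using neg1_pow_diff[OF ij] qs by (simp add: mult_ac)
    also have "\<dots> = K * B (Suc i)" using pw_claim2[OF assms(1) ij]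
      by (simp add: K_def B_def mult_ac)
    finally show "F (j - Suc i) = K * B (Suc i)" .
  qed simp
  finally have E: "(\<Sum>s\<le>2*j. F s) = K * ((\<Sum>i<j. B (Suc i)) + (\<Sum>r\<le>j. A r))"
    by (simp add: sum_distrib_left atLeast0AtMost distrib_left)
  obtain j' where j': "j = Suc j'" using assms(3) by (cases j) auto
  have "(\<Sum>r\<le>j. B r) = (\<Sum>i<j. B (Suc i))"
    unfolding j' by (subst sum.atMost_Suc_shift) (simp add: B_def lessThan_Suc_atMost)
  moreover have "(\<Sum>r\<le>j. c' q r * qb q (2*j) (j+r)) = (\<Sum>r\<le>j. A r) + (\<Sum>r\<le>j. B r)"
  proof -
    have "c' q r * qb q (2*j) (j+r) = A r + B r" for r
      by (cases "r = 0") (simp_all add: c'_def A_def B_def algebra_simps)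
    then show ?thesis by (simp add: sum.distrib[symmetric])
  qed
  moreover have "K \<noteq> 0" using assms by (simp add: K_def)
  moreover have "(\<Sum>s\<le>2*j. F s) = 0" using U0[OF assms(1,3)] by (simp add: F_def)
  ultimately show ?thesis using E by simp
qed

lemma swap_tri: fixes n :: nat shows "(\<Sum>j\<le>n. \<Sum>r\<le>j. g j r) = (\<Sum>r\<le>n. \<Sum>j\<in>{r..n}. (g j r::real))"
proof (induction n)
  case 0 then show ?case by simp
next
  case (Suc n)
  have "(\<Sum>r\<le>Suc n. \<Sum>j\<in>{r..Suc n}. g j r) = (\<Sum>r\<le>Suc n. (\<Sum>j\<in>{r..n}. g j r) + g (Suc n) r)"
    by (intro sum.cong refl) (simp add: atLeastAtMostSuc_conv)
  also have "\<dots> = (\<Sum>r\<le>n. \<Sum>j\<in>{r..n}. g j r) + (\<Sum>r\<le>Suc n. g (Suc n) r)"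
    by (simp add: sum.distrib)
  finally show ?case using Suc by simp
qed

lemma K1: assumes "0 < q" "q < 1"
  shows "(\<Sum>i\<le>m. q^(i^2 + a*i) / (P q i * P q (m-i) * P q (a+i))) = 1 / (P q m * P q (a+m))"
proof -
  have pos: "P q k > 0" for k using P_pos assms by auto
  have "(\<Sum>i\<le>m. q^(i^2 + a*i) / (P q i * P q (m-i) * P q (a+i))) * (P q m * P q (a+m))
      = (\<Sum>i\<le>m. tK q m a i)"
    unfolding sum_distrib_right
  proof (rule sum.cong)
    fix i assume "i \<in> {..m}"
    then have im: "i \<le> m" by simp
    have R: "R q (a+i+1) (m-i) = P q (a+m) / P q (a+i)"
      using P_add[of q "a+i" "m-i"] im pos[of "a+i"] by (simp add: field_simps)
    show "q^(i^2 + a*i) / (P q i * P q (m-i) * P q (a+i)) * (P q m * P q (a+m)) = tK q m a i"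
      unfolding tK_def R qb_formula[OF assms im] using pos by (simp add: field_simps)
  qed simp
  also have "\<dots> = 1" by (rule K0)
  finally have h: "(\<Sum>i\<le>m. q^(i^2 + a*i) / (P q i * P q (m-i) * P q (a+i))) * (P q m * P q (a+m)) = 1" .
  have "P q m * P q (a+m) \<noteq> 0" using pos by (simp add: less_imp_neq[symmetric])
  with h show ?thesis by (simp add: eq_divide_eq)
qed

lemma K: assumes "0 < q" "q < 1" "r \<le> n"
  shows "(\<Sum>j\<in>{r..n}. q^(j^2) / (P q (n-j) * P q (j-r) * P q (j+r))) = q^(r^2) / (P q (n-r) * P q (n+r))"
proof -
  define m where "m = n - r"
  have n: "n = m + r" using assms m_def by simp
  have "(\<Sum>j\<in>{r..n}. q^(j^2) / (P q (n-j) * P q (j-r) * P q (j+r)))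
      = (\<Sum>i\<in>{0..m}. q^((i+r)^2) / (P q (n-(i+r)) * P q (i+r-r) * P q (i+r+r)))"
    using sum.shift_bounds_cl_nat_ivl[of "\<lambda>j. q^(j^2) / (P q (n-j) * P q (j-r) * P q (j+r))" 0 r m]
    by (simp add: n)
  also have "\<dots> = (\<Sum>i\<le>m. q^(r^2) * (q^(i^2 + (2*r)*i) / (P q i * P q (m-i) * P q (2*r+i))))"
  proof (rule sum.cong)
    fix i assume "i \<in> {..m}"
    have e: "(i+r)^2 = r^2 + (i^2 + 2*r*i)" by (simp add: power2_eq_square algebra_simps)
    show "q^((i+r)^2) / (P q (n-(i+r)) * P q (i+r-r) * P q (i+r+r)) = q^(r^2) * (q^(i^2 + (2*r)*i) / (P q i * P q (m-i) * P q (2*r+i)))"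
      by (simp add: e power_add n mult_2 mult_2_right algebra_simps)
  qed (simp add: atLeast0AtMost)
  also have "\<dots> = q^(r^2) * (\<Sum>i\<le>m. q^(i^2 + (2*r)*i) / (P q i * P q (m-i) * P q (2*r+i)))"
    by (rule sum_distrib_left[symmetric])
  also have "\<dots> = q^(r^2) / (P q m * P q (2*r+m))"
    by (simp only: K1[OF assms(1,2)]) simp
  finally have calc: "(\<Sum>j\<in>{r..n}. q^(j^2) / (P q (n-j) * P q (j-r) * P q (j+r))) = q^(r^2) / (P q m * P q (2*r+m))" .
  have e1: "n - r = m" and e2: "n + r = 2*r + m" using n by auto
  show ?thesis unfolding e1 e2 by (rule calc)
qed

lemma BL: assumes "0 < q" "q < 1"
  shows "(\<Sum>j\<le>n. q^(j^2) / P q (n-j) * (\<Sum>r\<le>j. g r / (P q (j-r) * P q (j+r))))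
       = (\<Sum>r\<le>n. g r * q^(r^2) / (P q (n-r) * P q (n+r)))"
proof -
  have "(\<Sum>j\<le>n. q^(j^2) / P q (n-j) * (\<Sum>r\<le>j. g r / (P q (j-r) * P q (j+r))))
     = (\<Sum>j\<le>n. \<Sum>r\<le>j. g r * (q^(j^2) / (P q (n-j) * P q (j-r) * P q (j+r))))"
    by (simp add: sum_distrib_left field_simps)
  also have "\<dots> = (\<Sum>r\<le>n. \<Sum>j\<in>{r..n}. g r * (q^(j^2) / (P q (n-j) * P q (j-r) * P q (j+r))))"
    by (rule swap_tri)
  also have "\<dots> = (\<Sum>r\<le>n. g r * q^(r^2) / (P q (n-r) * P q (n+r)))"
  proof (rule sum.cong[OF refl])
    fix r assume "r \<in> {..n}"
    then have rn: "r \<le> n" by simp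
    have "(\<Sum>j\<in>{r..n}. g r * (q^(j^2) / (P q (n-j) * P q (j-r) * P q (j+r))))
       = g r * (\<Sum>j\<in>{r..n}. q^(j^2) / (P q (n-j) * P q (j-r) * P q (j+r)))"
      by (rule sum_distrib_left[symmetric])
    also have "\<dots> = g r * (q^(r^2) / (P q (n-r) * P q (n+r)))" by (simp only: K[OF assms rn])
    finally show "(\<Sum>j\<in>{r..n}. g r * (q^(j^2) / (P q (n-j) * P q (j-r) * P q (j+r))))
       = g r * q^(r^2) / (P q (n-r) * P q (n+r))" by simp
  qed
  finally show ?thesis .
qed

lemma Aprime: assumes "0 < q" "q < 1"
  shows "1 / P q n = (\<Sum>r\<le>n. c' q r * q^(r^2) / (P q (n-r) * P q (n+r)))"
proof -
  have beta: "(\<Sum>r\<le>j. c' q r / (P q (j-r) * P q (j+r))) = (if j = 0 then 1 else 0)" for j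
  proof (cases "j = 0")
    case True then show ?thesis by (simp add: c'_def)
  next
    case False
    have pos: "P q k > 0" for k using P_pos assms by auto
    have "(\<Sum>r\<le>j. c' q r / (P q (j-r) * P q (j+r))) * P q (2*j) = (\<Sum>r\<le>j. c' q r * qb q (2*j) (j+r))"
      unfolding sum_distrib_right
    proof (rule sum.cong)
      fix r assume "r \<in> {..j}"
      then have "j + r \<le> 2*j" by simp
      from qb_formula[OF assms this] show "c' q r / (P q (j-r) * P q (j+r)) * P q (2*j) = c' q r * qb q (2*j) (j+r)"
        using pos by (simp add: field_simps mult_2)
    qed simp
    also have "\<dots> = 0" using U[OF assms] False by simp
    finally show ?thesis using False pos[of "2*j"] by simp
  qed
  have "(\<Sum>r\<le>n. c' q r * q^(r^2) / (P q (n-r) * P q (n+r)))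
     = (\<Sum>j\<le>n. q^(j^2) / P q (n-j) * (\<Sum>r\<le>j. c' q r / (P q (j-r) * P q (j+r))))"
    by (rule BL[OF assms, symmetric])
  also have "\<dots> = (\<Sum>j\<le>n. if j = 0 then 1 / P q n else 0)"
    by (intro sum.cong refl) (simp add: beta)
  also have "\<dots> = 1 / P q n" by (simp add: sum.delta)
  finally show ?thesis by simp
qed

lemma Bid: assumes "0 < q" "q < 1"
  shows "(\<Sum>j\<le>n. q^(j^2) / (P q j * P q (n-j))) = (\<Sum>r\<le>n. c' q r * q^(2*r^2) / (P q (n-r) * P q (n+r)))"
proof -
  have "(\<Sum>j\<le>n. q^(j^2) / (P q j * P q (n-j))) = (\<Sum>j\<le>n. q^(j^2) / P q (n-j) * (1 / P q j))"
    by (simp add: field_simps)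
  also have "\<dots> = (\<Sum>j\<le>n. q^(j^2) / P q (n-j) * (\<Sum>r\<le>j. (c' q r * q^(r^2)) / (P q (j-r) * P q (j+r))))"
    by (simp add: Aprime[OF assms])
  also have "\<dots> = (\<Sum>r\<le>n. (c' q r * q^(r^2)) * q^(r^2) / (P q (n-r) * P q (n+r)))"
    by (rule BL[OF assms])
  also have "\<dots> = (\<Sum>r\<le>n. c' q r * q^(2*r^2) / (P q (n-r) * P q (n+r)))"
    by (intro sum.cong refl) (simp add: mult_2 power_add)
  finally show ?thesis .
qed



definition QP :: "nat \<Rightarrow> nat \<Rightarrow> real poly" where
  "QP s m = (\<Prod>k\<in>{s..<s+m}. (1 - monom 1 k))"

definition CP0 :: "nat \<Rightarrow> real poly" where
  "CP0 r = (if r = 0 then 1 else monom ((-1)^r) (tri r) + monom ((-1)^r) (tri (Suc r)))"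

definition LHSp :: "nat \<Rightarrow> real poly" where
  "LHSp n = (\<Sum>j\<le>n. monom 1 (j^2) * QP (j+1) (n-j) * QP (n-j+1) (n+j))"

definition RHSp :: "nat \<Rightarrow> real poly" where
  "RHSp n = (\<Sum>r\<le>n. monom 1 (2*r^2) * CP0 r * QP (n-r+1) r * QP (n+r+1) (n-r))"

lemma poly_QP: "poly (QP s m) q = R q s m"
  by (simp add: QP_def R_def poly_prod poly_monom)

lemma poly_CP0: "poly (CP0 r) q = c' q r"
  by (simp add: CP0_def c'_def poly_monom algebra_simps)

lemma R_ratio: assumes "0 < q" "q < 1" shows "R q (Suc a) b = P q (a+b) / P q a"
  using P_add[of q a b] P_pos[OF assms, of a] by (simp add: field_simps)

lemma LHS_RHS_eval: assumes "0 < q" "q < 1" shows "poly (LHSp n) q = poly (RHSp n) q"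
proof -
  have pos: "P q k > 0" for k using P_pos assms by auto
  have "poly (LHSp n) q = (\<Sum>j\<le>n. q^(j^2) * (P q n / P q j) * (P q (2*n) / P q (n-j)))"
  proof (unfold LHSp_def poly_sum, rule sum.cong[OF refl])
    fix j assume "j \<in> {..n}"
    then have jn: "j \<le> n" by simp
    have "R q (j+1) (n-j) = P q n / P q j" using R_ratio[OF assms, of j "n-j"] jn by simp
    moreover have "R q (n-j+1) (n+j) = P q (2*n) / P q (n-j)" using R_ratio[OF assms, of "n-j" "n+j"] jn by (simp add: mult_2)
    ultimately show "poly (monom 1 (j^2) * QP (j+1) (n-j) * QP (n-j+1) (n+j)) q = q^(j^2) * (P q n / P q j) * (P q (2*n) / P q (n-j))"
      by (simp add: poly_QP poly_monom)
  qed
  also have "\<dots> = P q n * P q (2*n) * (\<Sum>j\<le>n. q^(j^2) / (P q j * P q (n-j)))"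
    by (simp add: sum_distrib_left field_simps)
  also have "\<dots> = P q n * P q (2*n) * (\<Sum>r\<le>n. c' q r * q^(2*r^2) / (P q (n-r) * P q (n+r)))"
    by (simp add: Bid[OF assms])
  also have "\<dots> = (\<Sum>r\<le>n. q^(2*r^2) * c' q r * (P q n / P q (n-r)) * (P q (2*n) / P q (n+r)))"
    by (simp add: sum_distrib_left field_simps)
  also have "\<dots> = poly (RHSp n) q"
  proof (unfold RHSp_def poly_sum, rule sum.cong[OF refl])
    fix r assume "r \<in> {..n}"
    then have rn: "r \<le> n" by simp
    have "R q (n-r+1) r = P q n / P q (n-r)" using R_ratio[OF assms, of "n-r" r] rn by simp
    moreover have "R q (n+r+1) (n-r) = P q (2*n) / P q (n+r)" using R_ratio[OF assms, of "n+r" "n-r"] rn by (simp add: mult_2)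
    ultimately show "q^(2*r^2) * c' q r * (P q n / P q (n-r)) * (P q (2*n) / P q (n+r)) = poly (monom 1 (2*r^2) * CP0 r * QP (n-r+1) r * QP (n+r+1) (n-r)) q"
      by (simp add: poly_QP poly_monom poly_CP0)
  qed
  finally show ?thesis .
qed

lemma poly_eq_on_interval:
  fixes p p' :: "real poly"
  assumes "\<And>x. 0 < x \<Longrightarrow> x < 1 \<Longrightarrow> poly p x = poly p' x"
  shows "p = p'"
proof (rule ccontr)
  assume "p \<noteq> p'"
  then have "p - p' \<noteq> 0" by simp
  then have "finite {x. poly (p - p') x = 0}" by (rule poly_roots_finite)
  moreover have "{0<..<1::real} \<subseteq> {x. poly (p - p') x = 0}" using assms by auto
  ultimately have "finite {0<..<1::real}" by (rule finite_subset[rotated])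
  then show False using infinite_Ioo[of "0::real" 1] by simp
qed

lemma LHS_RHS: "LHSp n = RHSp n"
  by (rule poly_eq_on_interval) (rule LHS_RHS_eval)

lemma QP_form: "\<exists>w. QP s m = 1 + monom 1 s * w"
proof (induction m)
  case 0 then show ?case by (auto simp: QP_def intro: exI[of _ 0])
next
  case (Suc m)
  then obtain w where w: "QP s m = 1 + monom 1 s * w" by blast
  have "QP s (Suc m) = QP s m * (1 - monom 1 (s+m))" by (simp add: QP_def)
  also have "\<dots> = (1 + monom 1 s * w) * (1 - monom 1 s * monom 1 m)"
    by (simp add: w mult_monom)
  also have "\<dots> = 1 + monom 1 s * (w - monom 1 m - monom 1 m * monom 1 s * w)"
    by (simp add: algebra_simps)
  finally show ?case by blast
qed

lemma coeff_monom_mult_low: "i < a \<Longrightarrow> coeff (monom (1::real) a * Y) i = 0"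
  by (simp add: coeff_monom_mult)

lemma LOW: assumes "i < a + s"
  shows "coeff (monom 1 a * Y * QP s m) i = coeff (monom 1 a * Y) i"
proof -
  obtain w where w: "QP s m = 1 + monom 1 s * w" using QP_form by blast
  have "monom 1 a * Y * QP s m = monom 1 a * Y + monom 1 s * (monom 1 a * Y * w)"
    by (simp add: w algebra_simps)
  moreover have "coeff (monom 1 s * (monom 1 a * Y * w)) i = 0"
  proof (cases "i < s")
    case True then show ?thesis by (simp add: coeff_monom_mult)
  next
    case False
    then have "i - s < a" using assms by simp
    then have "coeff (monom 1 a * (Y * w)) (i - s) = 0" by (rule coeff_monom_mult_low)
    then show ?thesis using False by (simp add: coeff_monom_mult mult.assoc)
  qed
  ultimately show ?thesis by simp
qed

lemma coeff_LHSp: "coeff (LHSp n) n = (\<Sum>j\<le>n. coeff (monom 1 (j^2) * QP (j+1) (n-j)) n)"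
  unfolding LHSp_def coeff_sum
proof (rule sum.cong[OF refl])
  fix j assume "j \<in> {..n}"
  have "j \<le> j^2" by (simp add: power2_eq_square)
  then have "n < j^2 + (n-j+1)" by simp
  then show "coeff (monom 1 (j^2) * QP (j+1) (n-j) * QP (n-j+1) (n+j)) n = coeff (monom 1 (j^2) * QP (j+1) (n-j)) n"
    by (rule LOW)
qed

lemma coeff_RHSp: "coeff (RHSp n) n = (\<Sum>r\<le>n. coeff (monom 1 (2*r^2) * CP0 r) n)"
  unfolding RHSp_def coeff_sum
proof (rule sum.cong[OF refl])
  fix r assume "r \<in> {..n}"
  then have rn: "r \<le> n" by simp
  have "r \<le> 2*r^2" by (simp add: power2_eq_square)
  then have a: "n < 2*r^2 + (n+r+1)" and b: "n < 2*r^2 + (n-r+1)" using rn by auto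
  have "coeff (monom 1 (2*r^2) * CP0 r * QP (n-r+1) r * QP (n+r+1) (n-r)) n
      = coeff (monom 1 (2*r^2) * (CP0 r * QP (n-r+1) r) * QP (n+r+1) (n-r)) n"
    by (simp add: mult.assoc)
  also have "\<dots> = coeff (monom 1 (2*r^2) * (CP0 r * QP (n-r+1) r)) n" using a by (rule LOW)
  also have "\<dots> = coeff (monom 1 (2*r^2) * CP0 r * QP (n-r+1) r) n" by (simp add: mult.assoc)
  also have "\<dots> = coeff (monom 1 (2*r^2) * CP0 r) n" using b by (rule LOW)
  finally show "coeff (monom 1 (2*r^2) * CP0 r * QP (n-r+1) r * QP (n+r+1) (n-r)) n = coeff (monom 1 (2*r^2) * CP0 r) n" .
qed

lemma prod_neg_monom: "finite X \<Longrightarrow> (\<Prod>x\<in>X. - monom (1::real) x) = monom ((-1)^card X) (\<Sum>X)"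
proof (induction X rule: finite_induct)
  case empty then show ?case by simp
next
  case (insert x X)
  then show ?case by (simp add: mult_monom minus_monom)
qed

lemma QP_expand: "QP s m = (\<Sum>X\<in>Pow {s..<s+m}. monom ((-1)^card X) (\<Sum>X))"
proof -
  have "QP s m = (\<Prod>k\<in>{s..<s+m}. (- monom 1 k) + 1)" by (simp add: QP_def)
  also have "\<dots> = (\<Sum>X\<in>Pow {s..<s+m}. (\<Prod>x\<in>X. - monom 1 x) * (\<Prod>x\<in>{s..<s+m}-X. 1))"
    by (rule prod_add) simp
  also have "\<dots> = (\<Sum>X\<in>Pow {s..<s+m}. monom ((-1)^card X) (\<Sum>X))"
    by (intro sum.cong refl) (auto simp: prod_neg_monom finite_subset)
  finally show ?thesis .
qed

lemma coeff_QP: "coeff (monom 1 a * QP s m) i = (\<Sum>X\<in>{X\<in>Pow {s..<s+m}. a + \<Sum>X = i}. (-1)^card X)"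
proof -
  have "coeff (monom 1 a * QP s m) i = (\<Sum>X\<in>Pow {s..<s+m}. if a + \<Sum>X = i then (-1)^card X else 0)"
    by (simp add: QP_expand sum_distrib_left mult_monom coeff_sum)
  also have "\<dots> = (\<Sum>X\<in>{X\<in>Pow {s..<s+m}. a + \<Sum>X = i}. (-1)^card X)"
    by (rule sum.inter_filter[symmetric]) simp
  finally show ?thesis .
qed



definition e1 :: "nat \<Rightarrow> nat" where "e1 r = 2*r^2 + tri r"
definition e2 :: "nat \<Rightarrow> nat" where "e2 r = 2*r^2 + tri (Suc r)"

definition ee :: "nat \<Rightarrow> nat \<Rightarrow> int" where
  "ee r n = (if r = 0 then (if n = 0 then 1 else 0)
      else (-1)^r * ((if n = e1 r then 1 else 0) + (if n = e2 r then 1 else 0)))"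

lemma coeff_CP0: "coeff (monom 1 (2*r^2) * CP0 r) n = of_int (ee r n)"
proof (cases "r = 0")
  case True then show ?thesis by (simp add: CP0_def ee_def)
next
  case False
  then have "monom 1 (2*r^2) * CP0 r = monom ((-1)^r) (e1 r) + monom ((-1)^r) (e2 r)"
    by (simp add: CP0_def e1_def e2_def distrib_left mult_monom)
  then show ?thesis using False by (auto simp: ee_def)
qed

definition SS :: "nat \<Rightarrow> nat \<Rightarrow> nat set set" where
  "SS n j = {X\<in>Pow {j+1..n}. j^2 + \<Sum>X = n}"

lemma finite_SS: "finite (SS n j)"
  unfolding SS_def by simp

lemma coeff_identity:
  "(\<Sum>j\<le>n. \<Sum>X\<in>SS n j. (-1::int)^card X) = (\<Sum>r\<le>n. ee r n)"
proof -
  have "real_of_int (\<Sum>j\<le>n. \<Sum>X\<in>SS n j. (-1::int)^card X) = coeff (LHSp n) n"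
    unfolding coeff_LHSp coeff_QP
  proof (simp only: of_int_sum, rule sum.cong[OF refl])
    fix j assume "j \<in> {..n}"
    then have "{j+1..<j+1+(n-j)} = {j+1..n}" by auto
    then show "(\<Sum>X\<in>SS n j. real_of_int ((-1)^card X)) = (\<Sum>X\<in>{X\<in>Pow {j+1..<j+1+(n-j)}. j^2 + \<Sum>X = n}. (-1)^card X)"
      by (simp add: SS_def)
  qed
  also have "\<dots> = coeff (RHSp n) n" by (simp add: LHS_RHS)
  also have "\<dots> = real_of_int (\<Sum>r\<le>n. ee r n)"
    unfolding coeff_RHSp coeff_CP0 by simp
  finally show ?thesis by (simp only: of_int_eq_iff)
qed

lemma even_sum_diff: "(\<And>x. x \<in> A \<Longrightarrow> even (f x - g x)) \<Longrightarrow> even (sum f A - sum g A :: int)"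
  by (simp add: sum_subtractf[symmetric] dvd_sum)

lemma parity_signs: "even ((\<Sum>X\<in>S. (-1::int)^card X) - int (card S))"
proof (cases "finite S")
  case True
  have "even ((\<Sum>X\<in>S. (-1::int)^card X) - (\<Sum>X\<in>S. 1))"
  proof (rule even_sum_diff)
    fix X show "even ((-1::int)^card X - 1)" by (cases "even (card X)") auto
  qed
  then show ?thesis by simp
next
  case False then show ?thesis by simp
qed

lemma e1_2: "2 * int (e1 r) = 5 * int r^2 - int r"
proof -
  have "2 * tri r + r = r*r" by (rule tri_sq)
  then have "2 * int (tri r) + int r = int r * int r" by (metis of_nat_add of_nat_mult of_nat_numeral)
  then show ?thesis by (simp add: e1_def power2_eq_square algebra_simps)
qed

lemma e2_2: "2 * int (e2 r) = 5 * int r^2 + int r"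
proof -
  have "2 * tri r + r = r*r" by (rule tri_sq)
  then have "2 * int (tri r) + int r = int r * int r" by (metis of_nat_add of_nat_mult of_nat_numeral)
  then show ?thesis by (simp add: e2_def power2_eq_square algebra_simps)
qed

lemma e1_mono: "strict_mono e1"
proof (rule strict_monoI)
  fix x y :: nat assume "x < y"
  show "e1 x < e1 y" by (rule lift_Suc_mono_less[of e1, OF _ \<open>x < y\<close>]) (simp add: e1_def power2_eq_square)
qed

lemma e2_mono: "strict_mono e2"
proof (rule strict_monoI)
  fix x y :: nat assume "x < y"
  show "e2 x < e2 y" by (rule lift_Suc_mono_less[of e2, OF _ \<open>x < y\<close>]) (simp add: e2_def power2_eq_square)
qed

lemma e12_lt: "1 \<le> r \<Longrightarrow> e1 r < e2 r"
  by (simp add: e1_def e2_def)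

lemma e21_lt: "e2 r < e1 (Suc r)"
  by (simp add: e1_def e2_def power2_eq_square)

lemma e1_ne_e2: assumes "1 \<le> r" shows "e1 r \<noteq> e2 r'"
proof (cases "r' < r")
  case True
  then have "Suc r' \<le> r" by simp
  then have "e1 (Suc r') \<le> e1 r" using e1_mono by (simp add: strict_mono_less_eq)
  then show ?thesis using e21_lt[of r'] by simp
next
  case False
  then have "e2 r \<le> e2 r'" using e2_mono by (simp add: strict_mono_less_eq)
  then show ?thesis using e12_lt[OF assms] by simp
qed

lemma rr_ge: "r \<le> (r::nat)*r" by (cases r) auto
lemma e1_ge: "r \<le> e1 r" using rr_ge[of r] unfolding e1_def power2_eq_square by linarith
lemma e2_ge: "r \<le> e2 r" using rr_ge[of r] by (simp add: e2_def power2_eq_square)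
lemma e1_pos: "1 \<le> r \<Longrightarrow> 0 < e1 r" by (simp add: e1_def)
lemma e2_pos: "1 \<le> r \<Longrightarrow> 0 < e2 r" by (simp add: e2_def)

lemma sum_ee_single: assumes "r0 \<le> n" "\<And>r. r \<le> n \<Longrightarrow> ee r n = (if r = r0 then v else 0)"
  shows "(\<Sum>r\<le>n. ee r n) = v"
proof -
  have "(\<Sum>r\<le>n. ee r n) = (\<Sum>r\<le>n. if r = r0 then v else 0)"
    using assms(2) by (intro sum.cong) auto
  also have "\<dots> = v" using assms(1) by (simp add: sum.delta)
  finally show ?thesis .
qed

lemma pent_char: "(\<exists>j::int. 2 * int n = 5*j^2 + j) \<longleftrightarrow>
   (n = 0 \<or> (\<exists>r\<ge>1. n = e1 r) \<or> (\<exists>r\<ge>1. n = e2 r))"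
proof
  assume "\<exists>j::int. 2 * int n = 5*j^2 + j"
  then obtain j :: int where j: "2 * int n = 5*j^2 + j" by blast
  consider "j = 0" | "j > 0" | "j < 0" by linarith
  then show "n = 0 \<or> (\<exists>r\<ge>1. n = e1 r) \<or> (\<exists>r\<ge>1. n = e2 r)"
  proof cases
    case 1 then show ?thesis using j by simp
  next
    case 2
    define r where "r = nat j"
    have "int r = j" using 2 by (simp add: r_def)
    then have "2 * int n = 2 * int (e2 r)" using j e2_2[of r] by simp
    then have "n = e2 r" by simp
    moreover have "r \<ge> 1" using 2 r_def by simp
    ultimately show ?thesis by blast
  next
    case 3
    define r where "r = nat (-j)"
    have "int r = -j" using 3 by (simp add: r_def)
    then have "2 * int n = 2 * int (e1 r)" using j e1_2[of r] by (simp add: power2_eq_square)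
    then have "n = e1 r" by simp
    moreover have "r \<ge> 1" using 3 r_def by simp
    ultimately show ?thesis by blast
  qed
next
  assume "n = 0 \<or> (\<exists>r\<ge>1. n = e1 r) \<or> (\<exists>r\<ge>1. n = e2 r)"
  then show "\<exists>j::int. 2 * int n = 5*j^2 + j"
  proof (elim disjE exE conjE)
    assume "n = 0" then show ?thesis by (intro exI[of _ 0]) simp
  next
    fix r assume "n = e1 r"
    then show ?thesis using e1_2[of r] by (intro exI[of _ "- int r"]) (simp add: power2_eq_square)
  next
    fix r assume "n = e2 r"
    then show ?thesis using e2_2[of r] by (intro exI[of _ "int r"]) simp
  qed
qed

lemma sum_ee_parity: "odd (\<Sum>r\<le>n. ee r n) \<longleftrightarrow> (\<exists>j::int. 2 * int n = 5*j^2 + j)"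
proof -
  have inj1: "inj e1" using e1_mono by (rule strict_mono_imp_inj_on)
  have inj2: "inj e2" using e2_mono by (rule strict_mono_imp_inj_on)
  consider (z) "n = 0" | (a) r0 where "r0 \<ge> 1" "n = e1 r0" | (b) r0 where "r0 \<ge> 1" "n = e2 r0"
    | (none) "n \<noteq> 0" "\<And>r. r \<ge> 1 \<Longrightarrow> n \<noteq> e1 r" "\<And>r. r \<ge> 1 \<Longrightarrow> n \<noteq> e2 r" by blast
  then show ?thesis
  proof cases
    case z
    have "(\<Sum>r\<le>n. ee r n) = 1"
      using z by (simp add: ee_def)
    then show ?thesis using z pent_char[of n] by simp
  next
    case a
    have "(\<Sum>r\<le>n. ee r n) = (-1)^r0"
    proof (rule sum_ee_single)
      show "r0 \<le> n" using a e1_ge by simp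
      fix r assume "r \<le> n"
      show "ee r n = (if r = r0 then (-1)^r0 else 0)"
        using a e1_ne_e2[OF a(1)] e1_pos[OF a(1)] inj1 by (auto simp: ee_def inj_eq)
    qed
    then show ?thesis using a by (auto simp: pent_char)
  next
    case b
    have "(\<Sum>r\<le>n. ee r n) = (-1)^r0"
    proof (rule sum_ee_single)
      show "r0 \<le> n" using b e2_ge by simp
      fix r assume "r \<le> n"
      have H: "\<forall>r\<ge>1. e1 r \<noteq> e2 r0" using e1_ne_e2 by blast
      have h1: "r \<ge> 1 \<Longrightarrow> n \<noteq> e1 r" using H b by auto
      have h2: "r \<noteq> r0 \<Longrightarrow> n \<noteq> e2 r" using inj2 b by (auto simp: inj_eq)
      have h3: "n \<noteq> 0" using b e2_pos[OF b(1)] by simp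
      show "ee r n = (if r = r0 then (-1)^r0 else 0)"
        using h1 h2 h3 b e12_lt[OF b(1)] by (auto simp: ee_def)
    qed
    then show ?thesis using b by (auto simp: pent_char)
  next
    case none
    have "(\<Sum>r\<le>n. ee r n) = 0"
      using none by (intro sum.neutral) (auto simp: ee_def)
    then show ?thesis using none by (auto simp: pent_char)
  qed
qed

lemma main_parity:
  "odd (\<Sum>j\<le>n. card (SS n j)) \<longleftrightarrow> (\<exists>j::int. 2 * int n = 5*j^2 + j)"
proof -
  have "even ((\<Sum>j\<le>n. \<Sum>X\<in>SS n j. (-1::int)^card X) - (\<Sum>j\<le>n. int (card (SS n j))))"
    by (rule even_sum_diff) (rule parity_signs)
  then have "odd (\<Sum>j\<le>n. int (card (SS n j))) \<longleftrightarrow> odd (\<Sum>r\<le>n. ee r n)"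
    unfolding coeff_identity by (metis even_add diff_add_cancel)
  then show ?thesis using sum_ee_parity by (simp flip: of_nat_sum)
qed



lemma sum_mset_mset_set: "finite X \<Longrightarrow> sum_mset (mset_set X) = (\<Sum>X :: nat)"
  using sum_unfold_sum_mset[of "\<lambda>x. x" X] by simp

lemma mem_le_sum_mset: "x \<in># (p::nat multiset) \<Longrightarrow> x \<le> sum_mset p"
  by (metis le_add1 multi_member_split sum_mset.add_mset)

lemma count_le_sum_mset: "count (p::nat multiset) 1 \<le> sum_mset p"
proof -
  have "replicate_mset (count p 1) 1 \<subseteq># p"
    by (simp add: subseteq_mset_def)
  then have "sum_mset (replicate_mset (count p 1) 1) \<le> sum_mset p"
    by (metis le_add1 subset_mset.add_diff_inverse sum_mset.union)
  then show ?thesis by simp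
qed

definition A0 :: "nat \<Rightarrow> nat set set" where
  "A0 n = {X\<in>Pow {2..n}. \<Sum>X = n}"

lemma CA_eq: "{p. is_partition p n \<and> c9_cond_a p} = mset_set ` A0 n"
proof (intro set_eqI iffI)
  fix p assume "p \<in> {p. is_partition p n \<and> c9_cond_a p}"
  then have pp: "is_partition p n" and ca: "c9_cond_a p" by auto
  have eq: "p = mset_set (set_mset p)"
  proof (rule multiset_eqI)
    fix x show "count p x = count (mset_set (set_mset p)) x"
      using ca by (cases "x \<in># p") (auto simp: c9_cond_a_def not_in_iff)
  qed
  have sub: "set_mset p \<subseteq> {2..n}"
  proof
    fix x assume "x \<in> set_mset p"
    then have "1 < x" "x \<le> sum_mset p" using ca mem_le_sum_mset by (auto simp: c9_cond_a_def)
    then show "x \<in> {2..n}" using pp by (auto simp: is_partition_def)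
  qed
  have "\<Sum>(set_mset p) = n"
    using pp eq sum_mset_mset_set[of "set_mset p"] by (simp add: is_partition_def)
  then have "set_mset p \<in> A0 n" using sub by (simp add: A0_def)
  then show "p \<in> mset_set ` A0 n" using eq by blast
next
  fix p assume "p \<in> mset_set ` A0 n"
  then obtain X where X: "X \<in> A0 n" "p = mset_set X" by blast
  then have fin: "finite X" and sub: "X \<subseteq> {2..n}" and s: "\<Sum>X = n"
    by (auto simp: A0_def intro: finite_subset)
  have "is_partition p n" using X fin sub s by (auto simp: is_partition_def sum_mset_mset_set)
  moreover have "c9_cond_a p" using X fin sub by (auto simp: c9_cond_a_def)
  ultimately show "p \<in> {p. is_partition p n \<and> c9_cond_a p}" by simp
qed

lemma card_CA: "card {p. is_partition p n \<and> c9_cond_a p} = card (A0 n)"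
proof -
  have "inj_on mset_set (A0 n)"
  proof (rule inj_onI)
    fix X Y assume "X \<in> A0 n" "Y \<in> A0 n" "mset_set X = mset_set Y"
    moreover have "finite X" "finite Y" using \<open>X \<in> A0 n\<close> \<open>Y \<in> A0 n\<close>
      by (auto simp: A0_def intro: finite_subset)
    ultimately show "X = Y" by simp
  qed
  then show ?thesis unfolding CA_eq by (rule card_image)
qed

definition fB :: "nat \<times> nat set \<Rightarrow> nat multiset" where
  "fB jX = replicate_mset ((fst jX)^2) 1 + mset_set (snd jX)"

lemma SS_fin: "X \<in> SS n j \<Longrightarrow> finite X"
  by (auto simp: SS_def intro: finite_subset)

lemma CB_eq: "{p. is_partition p n \<and> c9_cond_b p} = fB ` (SIGMA j:{2..n}. SS n j)"
proof (intro set_eqI iffI)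
  fix p assume "p \<in> {p. is_partition p n \<and> c9_cond_b p}"
  then have pp: "is_partition p n" and cb: "c9_cond_b p" by auto
  from cb obtain j where j: "2 \<le> j" "count p 1 = j^2"
    and oth: "\<And>x. x \<in># p \<Longrightarrow> x \<noteq> 1 \<Longrightarrow> j + 1 \<le> x \<and> count p x \<le> 1"
    unfolding c9_cond_b_def by blast
  define X where "X = set_mset p - {1}"
  have finX: "finite X" by (simp add: X_def)
  have eq: "p = fB (j, X)"
  proof (rule multiset_eqI)
    fix x show "count p x = count (fB (j, X)) x"
    proof (cases "x = 1")
      case True then show ?thesis using j by (simp add: fB_def X_def)
    next
      case False
      have c: "count (fB (j, X)) x = (if x \<in># p then 1 else 0)"
        using False finX by (simp add: fB_def X_def count_mset_set')
      show ?thesis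
      proof (cases "x \<in># p")
        case True
        then have "0 < count p x" "count p x \<le> 1" using oth[of x] False by auto
        then have "count p x = 1" by linarith
        then show ?thesis using c True by simp
      next
        case F2: False
        then show ?thesis using c by (simp add: not_in_iff)
      qed
    qed
  qed
  have "j \<le> j^2" by (simp add: power2_eq_square)
  also have "j^2 \<le> n" using j count_le_sum_mset[of p] pp by (simp add: is_partition_def)
  finally have jn: "j \<le> n" .
  have sub: "X \<subseteq> {j+1..n}"
  proof
    fix x assume "x \<in> X"
    then have "x \<in># p" "x \<noteq> 1" by (auto simp: X_def)
    then show "x \<in> {j+1..n}" using oth mem_le_sum_mset[of x p] pp by (auto simp: is_partition_def)
  qed
  have "n = sum_mset (fB (j, X))" using pp eq by (simp add: is_partition_def)
  also have "\<dots> = j^2 + \<Sum>X" by (simp add: fB_def sum_mset_mset_set finX)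
  finally have "X \<in> SS n j" using sub by (simp add: SS_def)
  then show "p \<in> fB ` (SIGMA j:{2..n}. SS n j)" using eq j jn by force
next
  fix p assume "p \<in> fB ` (SIGMA j:{2..n}. SS n j)"
  then obtain j X where jX: "j \<in> {2..n}" "X \<in> SS n j" "p = fB (j, X)" by blast
  then have fin: "finite X" and sub: "X \<subseteq> {j+1..n}" and s: "j^2 + \<Sum>X = n"
    by (auto simp: SS_def intro: finite_subset)
  have n1: "1 \<notin> X" using sub jX by auto
  have "is_partition p n"
    using jX fin sub s by (auto simp: is_partition_def fB_def sum_mset_mset_set)
  moreover have "c9_cond_b p"
    unfolding c9_cond_b_def
  proof (intro exI conjI ballI impI)
    show "2 \<le> j" using jX by simp
    show "count p 1 = j^2" using jX n1 fin by (simp add: fB_def)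
    fix x assume "x \<in># p" "x \<noteq> 1"
    then have "x \<in> X" using jX fin by (auto simp: fB_def)
    then show "j + 1 \<le> x" using sub by auto
    show "count p x \<le> 1" using jX fin \<open>x \<noteq> 1\<close> by (simp add: fB_def count_mset_set')
  qed
  ultimately show "p \<in> {p. is_partition p n \<and> c9_cond_b p}" by simp
qed

lemma card_CB: "card {p. is_partition p n \<and> c9_cond_b p} = (\<Sum>j\<in>{2..n}. card (SS n j))"
proof -
  have "inj_on fB (SIGMA j:{2..n}. SS n j)"
  proof (rule inj_onI)
    fix a b assume a: "a \<in> (SIGMA j:{2..n}. SS n j)" and b: "b \<in> (SIGMA j:{2..n}. SS n j)"
      and ab: "fB a = fB b"
    obtain j X where aa: "a = (j, X)" "j \<in> {2..n}" "X \<in> SS n j" using a by blast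
    obtain j' X' where bb: "b = (j', X')" "j' \<in> {2..n}" "X' \<in> SS n j'" using b by blast
    have f: "finite X" "finite X'" using aa bb SS_fin by auto
    have n1: "1 \<notin> X" "1 \<notin> X'" using aa bb by (auto simp: SS_def)
    have "count (fB a) 1 = count (fB b) 1" using ab by simp
    then have "j^2 = j'^2" using aa bb f n1 by (simp add: fB_def)
    then have jj: "j = j'" by (simp add: power2_eq_iff_nonneg)
    then have "mset_set X = mset_set X'" using ab aa bb by (simp add: fB_def)
    then have "X = X'" using f by simp
    then show "a = b" using aa bb jj by simp
  qed
  then have "card {p. is_partition p n \<and> c9_cond_b p} = card (SIGMA j:{2..n}. SS n j)"
    unfolding CB_eq by (rule card_image)
  also have "\<dots> = (\<Sum>j\<in>{2..n}. card (SS n j))"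
    by (rule card_SigmaI) (auto simp: finite_SS)
  finally show ?thesis .
qed

lemma SS0_split: "card (SS n 0) = card (A0 n) + card (SS n 1)"
proof -
  have eq: "SS n 0 = A0 n \<union> insert 1 ` SS n 1"
  proof (intro set_eqI iffI)
    fix X assume X: "X \<in> SS n 0"
    have fin: "finite X" using X SS_fin by blast
    have sub: "X \<subseteq> {1..n}" and s: "\<Sum>X = n" using X by (auto simp: SS_def)
    show "X \<in> A0 n \<union> insert 1 ` SS n 1"
    proof (cases "1 \<in> X")
      case False
      have "X \<subseteq> {2..n}"
      proof
        fix x assume "x \<in> X"
        with sub False have "x \<in> {1..n}" "x \<noteq> 1" by auto
        then show "x \<in> {2..n}" by simp
      qed
      then have "X \<in> A0 n" using s by (simp add: A0_def)
      then show ?thesis by blast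
    next
      case True
      have s1: "\<Sum>X = 1 + \<Sum>(X - {1})" using fin True by (simp add: sum.remove)
      have "X - {1} \<subseteq> {2..n}"
      proof
        fix x assume "x \<in> X - {1}"
        with sub have "x \<in> {1..n}" "x \<noteq> 1" by auto
        then show "x \<in> {2..n}" by simp
      qed
      then have "X - {1} \<in> SS n 1" using s s1 by (simp add: SS_def numeral_2_eq_2)
      moreover have "X = insert 1 (X - {1})" using True by blast
      ultimately show ?thesis by blast
    qed
  next
    fix X assume "X \<in> A0 n \<union> insert 1 ` SS n 1"
    then show "X \<in> SS n 0"
    proof
      assume "X \<in> A0 n"
      then have "X \<subseteq> {2..n}" "\<Sum>X = n" by (auto simp: A0_def)
      moreover have "{2..n} \<subseteq> {0+1..n}" by auto
      ultimately have "X \<subseteq> {0+1..n}" by blast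
      then show ?thesis using \<open>\<Sum>X = n\<close> unfolding SS_def by simp
    next
      assume "X \<in> insert 1 ` SS n 1"
      then obtain Y where Y: "Y \<in> SS n 1" "X = insert 1 Y" by blast
      have fY: "finite Y" using Y(1) SS_fin by blast
      have sub: "Y \<subseteq> {2..n}" and s: "1 + \<Sum>Y = n" using Y(1) by (auto simp: SS_def numeral_2_eq_2)
      have n1: "1 \<notin> Y" using sub by auto
      have "\<Sum>X = n" using Y(2) s fY n1 by simp
      moreover have "X \<subseteq> {1..n}" using Y(2) sub s by auto
      ultimately show ?thesis unfolding SS_def by simp
    qed
  qed
  have fin: "finite (A0 n)" by (simp add: A0_def)
  have disj: "A0 n \<inter> insert 1 ` SS n 1 = {}"
  proof (rule ccontr)
    assume "A0 n \<inter> insert 1 ` SS n 1 \<noteq> {}"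
    then obtain X where "X \<in> A0 n" "1 \<in> X" by blast
    then show False by (auto simp: A0_def)
  qed
  have inj: "inj_on (insert 1) (SS n 1)"
  proof (rule inj_onI)
    fix X Y assume "X \<in> SS n 1" "Y \<in> SS n 1" "insert 1 X = insert 1 Y"
    moreover have "1 \<notin> X" "1 \<notin> Y" using \<open>X \<in> SS n 1\<close> \<open>Y \<in> SS n 1\<close> by (auto simp: SS_def)
    ultimately show "X = Y" by (metis Diff_insert_absorb)
  qed
  have "card (A0 n \<union> insert 1 ` SS n 1) = card (A0 n) + card (insert 1 ` SS n 1)"
    by (rule card_Un_disjoint[OF fin finite_imageI[OF finite_SS] disj])
  also have "card (insert 1 ` SS n 1) = card (SS n 1)" by (rule card_image[OF inj])
  finally show ?thesis unfolding eq .
qed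

lemma c9_decomp: "c9 n + 2 * card (SS n 1) = (\<Sum>j\<le>n. card (SS n j))"
proof -
  have split: "{p. is_partition p n \<and> (c9_cond_a p \<or> c9_cond_b p)}
     = {p. is_partition p n \<and> c9_cond_a p} \<union> {p. is_partition p n \<and> c9_cond_b p}" by auto
  have disj: "{p. is_partition p n \<and> c9_cond_a p} \<inter> {p. is_partition p n \<and> c9_cond_b p} = {}"
  proof (rule ccontr)
    assume "\<not> ?thesis"
    then obtain p where a: "c9_cond_a p" and b: "c9_cond_b p" by blast
    from b obtain j where j: "2 \<le> j" "count p 1 = j^2" by (auto simp: c9_cond_b_def)
    have "0 < j^2" using j by simp
    then have "0 < count p 1" using j by simp
    then have "1 \<in># p" by (simp only: count_greater_zero_iff)
    then show False using a by (auto simp: c9_cond_a_def)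
  qed
  have fA: "finite {p. is_partition p n \<and> c9_cond_a p}" unfolding CA_eq by (simp add: A0_def)
  have fB': "finite {p. is_partition p n \<and> c9_cond_b p}" unfolding CB_eq by (simp add: finite_SS)
  have "c9 n = card (A0 n) + (\<Sum>j\<in>{2..n}. card (SS n j))"
    unfolding c9_def split card_Un_disjoint[OF fA fB' disj] card_CA card_CB ..
  moreover have "(\<Sum>j\<le>n. card (SS n j)) = card (SS n 0) + card (SS n 1) + (\<Sum>j\<in>{2..n}. card (SS n j))"
  proof (cases "n = 0")
    case True
    have "SS 0 1 = {}" by (auto simp: SS_def)
    then show ?thesis using True by simp
  next
    case False
    have "{..n} = {0, 1} \<union> {2..n}" using False by auto
    then show ?thesis by (simp add: sum.union_disjoint)
  qed
  ultimately show ?thesis using SS0_split[of n] by simp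
qed


theorem theorem10:
  fixes n :: nat
  shows "odd (c9 n) \<longleftrightarrow> (\<exists>j::int. 2 * int n = 5 * j^2 + j)"
proof -
  have "odd (c9 n) \<longleftrightarrow> odd (c9 n + 2 * card (SS n 1))" by simp
  also have "\<dots> \<longleftrightarrow> odd (\<Sum>j\<le>n. card (SS n j))" by (simp only: c9_decomp)
  also have "\<dots> \<longleftrightarrow> (\<exists>j::int. 2 * int n = 5*j^2 + j)" by (rule main_parity)
  finally show ?thesis .
qed

end
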